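(* Let $f_\mu:\mathbb{R}^d\to[0,\infty)$ be measurable and satisfy $$\sum_{r\ge1}r^{d-1}\sup_{x\in\mathbb{R}^d\setminus B(0,r-1)}f_\mu(x)<\infty.$$ Then there exists a constant $C>0$ such that for every affine hyperplane $\mathcal H\subset\mathbb{R}^d$, $$\int_{\mathcal H}f_\mu(x)\,d\mathcal H^{d-1}(x)\le C.$$
   Context: $\mathcal H^{d-1}$ denotes the $(d-1)$-dimensional Hausdorff measure on $\mathbb{R}^d$; $B(0,r)$ is the Euclidean ball of radius $r$ centered at $0$. *)

theory Defs
  imports "HOL-Analysis.Analysis"
begin

definition unit_ball_vol :: "nat \<Rightarrow> real" where
  "unit_ball_vol s = pi powr (real s / 2) / Gamma (real s / 2 + 1)"

text \<open>Cost of a covering set in the s-dimensional Hausdorff premeasure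
  (empty sets cost nothing, so that nat-indexed covers model countable covers).\<close>
definition hcost :: "nat \<Rightarrow> 'a::metric_space set \<Rightarrow> ennreal" where
  "hcost s C = (if C = {} then 0 else ennreal (unit_ball_vol s * (diameter C / 2) ^ s))"

definition hausdorff_pre :: "nat \<Rightarrow> real \<Rightarrow> 'a::metric_space set \<Rightarrow> ennreal" where
  "hausdorff_pre s \<delta> A =
     (INF C \<in> {C :: nat \<Rightarrow> 'a set. A \<subseteq> (\<Union>i. C i) \<and>
                  (\<forall>i. bounded (C i) \<and> diameter (C i) \<le> \<delta>)}.
        (\<Sum>i. hcost s (C i)))"

definition hausdorff_outer :: "nat \<Rightarrow> 'a::metric_space set \<Rightarrow> ennreal" where
  "hausdorff_outer s A = (SUP \<delta> \<in> {0<..}. hausdorff_pre s \<delta> A)"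

definition hausdorff_measure :: "nat \<Rightarrow> 'a::metric_space measure" where
  "hausdorff_measure s =
     measure_of UNIV (lambda_system UNIV UNIV (hausdorff_outer s)) (hausdorff_outer s)"

end

theory Submission imports Defs begin

lemma cube_diam:
  fixes a x y :: "'a::euclidean_space"
  assumes k: "k \<in> Basis" "\<forall>i\<in>Basis. \<bar>a \<bullet> i\<bar> \<le> \<bar>a \<bullet> k\<bar>" and ak: "a \<bullet> k \<noteq> 0"
    and xy: "a \<bullet> x = b" "a \<bullet> y = b"
    and co: "\<forall>i\<in>Basis. i \<noteq> k \<longrightarrow> \<bar>x \<bullet> i - y \<bullet> i\<bar> \<le> \<epsilon>" and e: "\<epsilon> \<ge> 0"
  shows "norm (x - y) \<le> real DIM('a)^2 * \<epsilon>"
proof -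
  define z where "z = x - y"
  have d1: "real DIM('a) \<ge> 1" by (simp add: DIM_positive Suc_le_eq)
  have az: "a \<bullet> z = 0" using xy by (simp add: z_def inner_diff_right)
  have "(\<Sum>i\<in>Basis. (a \<bullet> i) * (z \<bullet> i)) = 0" using euclidean_inner[of a z] az by simp
  hence "(a \<bullet> k) * (z \<bullet> k) + (\<Sum>i\<in>Basis-{k}. (a \<bullet> i) * (z \<bullet> i)) = 0"
    using k(1) by (simp add: sum.remove)
  hence "(a \<bullet> k) * (z \<bullet> k) = - (\<Sum>i\<in>Basis-{k}. (a \<bullet> i) * (z \<bullet> i))" by linarith
  hence "\<bar>(a \<bullet> k) * (z \<bullet> k)\<bar> = \<bar>\<Sum>i\<in>Basis-{k}. (a \<bullet> i) * (z \<bullet> i)\<bar>" by simp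
  hence "\<bar>a \<bullet> k\<bar> * \<bar>z \<bullet> k\<bar> = \<bar>\<Sum>i\<in>Basis-{k}. (a \<bullet> i) * (z \<bullet> i)\<bar>" by (simp add: abs_mult)
  also have "\<dots> \<le> (\<Sum>i\<in>Basis-{k}. \<bar>a \<bullet> i\<bar> * \<bar>z \<bullet> i\<bar>)"
    by (rule order_trans[OF sum_abs]) (simp add: abs_mult)
  also have "\<dots> \<le> (\<Sum>i\<in>Basis-{k}. \<bar>a \<bullet> k\<bar> * \<epsilon>)"
  proof (rule sum_mono)
    fix i assume i: "i \<in> Basis - {k}"
    have "\<bar>z \<bullet> i\<bar> \<le> \<epsilon>" using co i by (simp add: z_def inner_diff_left)
    thus "\<bar>a \<bullet> i\<bar> * \<bar>z \<bullet> i\<bar> \<le> \<bar>a \<bullet> k\<bar> * \<epsilon>"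
      using k(2) i by (intro mult_mono) auto
  qed
  also have "\<dots> \<le> \<bar>a \<bullet> k\<bar> * (real DIM('a) * \<epsilon>)"
  proof -
    have p: "0 \<le> \<bar>a \<bullet> k\<bar> * \<epsilon>" using e by simp
    show ?thesis using k(1) p by (simp add: card_Diff_singleton algebra_simps)
  qed
  finally have zk: "\<bar>z \<bullet> k\<bar> \<le> real DIM('a) * \<epsilon>" using ak by simp
  have all: "\<bar>z \<bullet> i\<bar> \<le> real DIM('a) * \<epsilon>" if "i \<in> Basis" for i
  proof (cases "i = k")
    case True thus ?thesis using zk by simp
  next
    case False
    hence "\<bar>z \<bullet> i\<bar> \<le> \<epsilon>" using co that by (simp add: z_def inner_diff_left)
    also have "\<epsilon> \<le> real DIM('a) * \<epsilon>" using d1 e by (simp add: mult_le_cancel_right1)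
    finally show ?thesis .
  qed
  have "norm z \<le> (\<Sum>i\<in>Basis. \<bar>z \<bullet> i\<bar>)" by (rule norm_le_l1)
  also have "\<dots> \<le> (\<Sum>i\<in>(Basis::'a set). real DIM('a) * \<epsilon>)" using all by (intro sum_mono) auto
  also have "\<dots> = real DIM('a)^2 * \<epsilon>" by (simp add: power2_eq_square)
  finally show ?thesis by (simp add: z_def)
qed

lemma pre_le:
  assumes "A \<subseteq> (\<Union>i. C i)" "\<And>i. bounded (C i)" "\<And>i. diameter (C i) \<le> \<delta>"
  shows "hausdorff_pre s \<delta> A \<le> (\<Sum>i. hcost s (C i))"
  unfolding hausdorff_pre_def by (rule INF_lower) (use assms in auto)

lemma outer_mono:
  assumes "A \<subseteq> B" shows "hausdorff_outer s A \<le> hausdorff_outer s B"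
  unfolding hausdorff_outer_def
proof (rule SUP_mono)
  fix d :: real assume "d \<in> {0<..}"
  have "hausdorff_pre s d A \<le> hausdorff_pre s d B"
    unfolding hausdorff_pre_def by (rule INF_superset_mono) (use assms in auto)
  thus "\<exists>m\<in>{0<..}. hausdorff_pre s d A \<le> hausdorff_pre s m B" using \<open>d \<in> _\<close> by blast
qed

lemma emeasure_le_outer:
  "emeasure (hausdorff_measure s) A \<le> hausdorff_outer s A"
  unfolding hausdorff_measure_def emeasure_measure_of_conv by auto

lemma vol_nonneg: "unit_ball_vol s \<ge> 0"
  unfolding unit_ball_vol_def by (intro divide_nonneg_pos) auto

lemma outer_bound:
  fixes a :: "'a::euclidean_space"
  assumes a: "a \<noteq> 0" and R: "R \<ge> 1"
  shows "hausdorff_outer (DIM('a)-1) ({x. a \<bullet> x = b} \<inter> cball 0 R)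
     \<le> ennreal (unit_ball_vol (DIM('a)-1) * (3 * real DIM('a)^2 * R)^(DIM('a)-1))"
proof -
  define s where "s = DIM('a) - 1"
  define D where "D = real DIM('a)^2"
  have D1: "D \<ge> 1" unfolding D_def by (simp add: DIM_positive Suc_le_eq)
  obtain k where k: "k \<in> Basis" "\<forall>i\<in>Basis. \<bar>a \<bullet> i\<bar> \<le> \<bar>a \<bullet> k\<bar>"
  proof -
    have "Max ((\<lambda>i. \<bar>a \<bullet> i\<bar>) ` Basis) \<in> (\<lambda>i. \<bar>a \<bullet> i\<bar>) ` Basis"
      by (rule Max_in) auto
    then obtain k where "k \<in> Basis" "\<bar>a \<bullet> k\<bar> = Max ((\<lambda>i. \<bar>a \<bullet> i\<bar>) ` Basis)" by (metis (no_types, lifting) imageE)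
    thus ?thesis using that by auto
  qed
  have ak: "a \<bullet> k \<noteq> 0"
  proof
    assume "a \<bullet> k = 0"
    hence "\<forall>i\<in>Basis. a \<bullet> i = 0" using k(2) by fastforce
    hence "a = 0" by (simp add: euclidean_all_zero_iff)
    thus False using a by simp
  qed
  have vol: "unit_ball_vol s \<ge> 0" by (rule vol_nonneg)
  show ?thesis unfolding hausdorff_outer_def s_def[symmetric]
  proof (rule SUP_least)
    fix \<delta> :: real assume "\<delta> \<in> {0<..}"
    hence \<delta>: "\<delta> > 0" by simp
    define \<epsilon> where "\<epsilon> = min 1 (\<delta> / D)"
    have e: "0 < \<epsilon>" "\<epsilon> \<le> 1" "D * \<epsilon> \<le> \<delta>"
      using \<delta> D1 by (auto simp: \<epsilon>_def min_def field_simps)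
    define N where "N = \<lceil>R / \<epsilon>\<rceil> + 1"
    have "0 < R / \<epsilon>" using R e by simp
    hence "-1 < R / \<epsilon>" by linarith
    hence N1: "N \<ge> 1" unfolding N_def by simp
    define F where "F = PiE Basis (\<lambda>i. if i = k then {0::int} else {-N..N-1})"
    define Q where "Q \<kappa> = {x. a \<bullet> x = b \<and> (\<forall>i\<in>Basis. i \<noteq> k \<longrightarrow>
        \<epsilon> * of_int (\<kappa> i) \<le> x \<bullet> i \<and> x \<bullet> i \<le> \<epsilon> * (of_int (\<kappa> i) + 1))}" for \<kappa> :: "'a \<Rightarrow> int"
    have finF: "finite F" by (simp add: F_def finite_PiE)
    obtain h where h: "bij_betw h {0..<card F} F" using ex_bij_betw_nat_finite[OF finF] by blast
    define C where "C i = (if i < card F then Q (h i) else {})" for i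
    have cover: "{x. a \<bullet> x = b} \<inter> cball 0 R \<subseteq> (\<Union>i. C i)"
    proof
      fix x assume x: "x \<in> {x. a \<bullet> x = b} \<inter> cball 0 R"
      define \<kappa> where "\<kappa> = (\<lambda>i. if i \<in> Basis then (if i = k then 0 else \<lfloor>x \<bullet> i / \<epsilon>\<rfloor>) else undefined)"
      have bnd: "-N \<le> \<lfloor>x \<bullet> i / \<epsilon>\<rfloor> \<and> \<lfloor>x \<bullet> i / \<epsilon>\<rfloor> \<le> N - 1" if i: "i \<in> Basis" for i
      proof -
        have "\<bar>x \<bullet> i\<bar> \<le> R" using Basis_le_norm[OF i, of x] x by simp
        hence xi: "-R \<le> x \<bullet> i" "x \<bullet> i \<le> R" by auto
        have "-(R / \<epsilon>) \<le> x \<bullet> i / \<epsilon>" using divide_right_mono[OF xi(1), of \<epsilon>] e by simp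
        moreover have "x \<bullet> i / \<epsilon> \<le> R / \<epsilon>" using divide_right_mono[OF xi(2), of \<epsilon>] e by simp
        moreover have "R / \<epsilon> \<le> of_int \<lceil>R / \<epsilon>\<rceil>" by (rule le_of_int_ceiling)
        moreover have "real_of_int (-N) = -of_int \<lceil>R / \<epsilon>\<rceil> - 1" "real_of_int N = of_int \<lceil>R / \<epsilon>\<rceil> + 1"
          by (simp_all add: N_def)
        ultimately have "of_int (-N) \<le> x \<bullet> i / \<epsilon>" "x \<bullet> i / \<epsilon> < of_int N"
          by linarith+
        thus ?thesis by (simp add: le_floor_iff floor_less_iff)
      qed
      have "\<kappa> \<in> F" unfolding F_def PiE_iff extensional_def
        using bnd by (auto simp: \<kappa>_def)
      then obtain j where j: "j < card F" "h j = \<kappa>"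
        using h unfolding bij_betw_def by (metis atLeastLessThan_iff imageE)
      have "x \<in> Q \<kappa>"
      proof -
        have "\<epsilon> * of_int \<lfloor>x \<bullet> i / \<epsilon>\<rfloor> \<le> x \<bullet> i \<and> x \<bullet> i \<le> \<epsilon> * (of_int \<lfloor>x \<bullet> i / \<epsilon>\<rfloor> + 1)" for i
        proof -
          have f1: "of_int \<lfloor>x \<bullet> i / \<epsilon>\<rfloor> \<le> x \<bullet> i / \<epsilon>" by (rule of_int_floor_le)
          have f2: "x \<bullet> i / \<epsilon> \<le> of_int \<lfloor>x \<bullet> i / \<epsilon>\<rfloor> + 1" by linarith
          have m1: "\<epsilon> * of_int \<lfloor>x \<bullet> i / \<epsilon>\<rfloor> \<le> \<epsilon> * (x \<bullet> i / \<epsilon>)"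
            using mult_left_mono[OF f1, of \<epsilon>] e by simp
          have m2: "\<epsilon> * (x \<bullet> i / \<epsilon>) \<le> \<epsilon> * (of_int \<lfloor>x \<bullet> i / \<epsilon>\<rfloor> + 1)"
            using mult_left_mono[OF f2, of \<epsilon>] e by simp
          have eq: "\<epsilon> * (x \<bullet> i / \<epsilon>) = x \<bullet> i" using e by simp
          show ?thesis using m1 m2 eq by linarith
        qed
        thus ?thesis using x by (auto simp: Q_def \<kappa>_def)
      qed
      thus "x \<in> (\<Union>i. C i)" using j by (auto simp: C_def)
    qed
    have Qdist: "norm (x - y) \<le> D * \<epsilon>" if "x \<in> Q \<kappa>" "y \<in> Q \<kappa>" for x y \<kappa>
    proof -
      have "\<forall>i\<in>Basis. i \<noteq> k \<longrightarrow> \<bar>x \<bullet> i - y \<bullet> i\<bar> \<le> \<epsilon>"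
        using that unfolding Q_def by (force simp: abs_le_iff algebra_simps)
      thus ?thesis unfolding D_def
        using cube_diam[OF k ak, of x b y \<epsilon>] that e by (auto simp: Q_def)
    qed
    have Cdist: "norm (x - y) \<le> D * \<epsilon>" if "x \<in> C i" "y \<in> C i" for x y i
      using that Qdist by (auto simp: C_def split: if_splits)
    have diam: "diameter (C i) \<le> D * \<epsilon>" for i
      by (rule diameter_le) (use Cdist e D1 in auto)
    have bdd: "bounded (C i)" for i
    proof (cases "C i = {}")
      case False
      then obtain x0 where x0: "x0 \<in> C i" by auto
      have "C i \<subseteq> cball x0 (D * \<epsilon>)" using Cdist[OF x0] by (auto simp: dist_norm)
      thus ?thesis using bounded_cball bounded_subset by blast
    qed simp
    have hc: "hcost s (C i) \<le> ennreal (unit_ball_vol s * (D * \<epsilon> / 2) ^ s)" for i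
    proof (cases "C i = {}")
      case False
      have "diameter (C i) \<ge> 0" by (rule diameter_ge_0[OF bdd])
      hence "(diameter (C i) / 2) ^ s \<le> (D * \<epsilon> / 2) ^ s"
        using diam[of i] by (intro power_mono) auto
      thus ?thesis using False vol by (auto simp: hcost_def intro!: ennreal_leI mult_left_mono)
    qed (simp add: hcost_def)
    have "hausdorff_pre s \<delta> ({x. a \<bullet> x = b} \<inter> cball 0 R) \<le> (\<Sum>i. hcost s (C i))"
      by (rule pre_le[OF cover bdd]) (use diam e order_trans in blast)
    also have "(\<Sum>i. hcost s (C i)) = (\<Sum>i<card F. hcost s (C i))"
      by (rule suminf_finite) (auto simp: C_def hcost_def)
    also have "\<dots> \<le> (\<Sum>i<card F. ennreal (unit_ball_vol s * (D * \<epsilon> / 2) ^ s))"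
      by (rule sum_mono) (rule hc)
    also have "\<dots> = ennreal (real (card F) * (unit_ball_vol s * (D * \<epsilon> / 2) ^ s))"
      using vol e D1 by (subst sum_ennreal) auto
    also have "\<dots> \<le> ennreal (unit_ball_vol s * (3 * D * R) ^ s)"
    proof (rule ennreal_leI)
      have cardF: "card F = nat (2 * N) ^ s"
      proof -
        have "card F = (\<Prod>i\<in>Basis. card (if i = k then {0::int} else {-N..N-1}))"
          unfolding F_def by (simp add: card_PiE)
        also have "\<dots> = (\<Prod>i\<in>Basis - {k}. card (if i = k then {0::int} else {-N..N-1}))"
          using k(1) by (simp add: prod.remove)
        also have "\<dots> = (\<Prod>i\<in>Basis - {k}. nat (2 * N))" by (rule prod.cong) auto
        also have "\<dots> = nat (2 * N) ^ s" using k(1) by (simp add: s_def card_Diff_singleton)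
        finally show ?thesis .
      qed
      have rc: "real (card F) = (2 * of_int N) ^ s" using N1 by (simp add: cardF)
      have "of_int N * \<epsilon> \<le> 3 * R"
      proof -
        have "of_int \<lceil>R / \<epsilon>\<rceil> \<le> R / \<epsilon> + 1" using ceiling_correct[of "R / \<epsilon>"] by linarith
        hence N2: "real_of_int N \<le> R / \<epsilon> + 2" unfolding N_def of_int_add of_int_1 by linarith
        have "of_int N * \<epsilon> \<le> (R / \<epsilon> + 2) * \<epsilon>" using mult_right_mono[OF N2, of \<epsilon>] e by simp
        also have "\<dots> = R + 2 * \<epsilon>" using e by (simp add: field_simps)
        finally show ?thesis using e R by linarith
      qed
      hence "of_int N * D * \<epsilon> \<le> 3 * D * R" using D1
        by (metis mult.commute mult.left_commute mult_left_mono order_trans zero_le_one)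
      hence "(of_int N * D * \<epsilon>) ^ s \<le> (3 * D * R) ^ s" using N1 e D1
        by (intro power_mono) auto
      hence ineq: "unit_ball_vol s * (of_int N * D * \<epsilon>) ^ s \<le> unit_ball_vol s * (3 * D * R) ^ s"
        using vol by (rule mult_left_mono)
      have eqv: "real (card F) * (unit_ball_vol s * (D * \<epsilon> / 2) ^ s)
          = unit_ball_vol s * (of_int N * D * \<epsilon>) ^ s"
      proof -
        have "(2 * of_int N) ^ s * (D * \<epsilon> / 2) ^ s = (2 * of_int N * (D * \<epsilon> / 2)) ^ s"
          by (rule power_mult_distrib[symmetric])
        also have "2 * of_int N * (D * \<epsilon> / 2) = of_int N * D * \<epsilon>" by simp
        finally have "(2 * of_int N) ^ s * (D * \<epsilon> / 2) ^ s = (of_int N * D * \<epsilon>) ^ s" .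
        thus ?thesis unfolding rc by (metis mult.left_commute)
      qed
      show "real (card F) * (unit_ball_vol s * (D * \<epsilon> / 2) ^ s) \<le> unit_ball_vol s * (3 * D * R) ^ s"
        unfolding eqv by (rule ineq)
    qed
    finally show "hausdorff_pre s \<delta> ({x. a \<bullet> x = b} \<inter> cball 0 R)
        \<le> ennreal (unit_ball_vol s * (3 * real DIM('a)^2 * R) ^ s)" by (simp add: D_def)
  qed
qed


lemma ennreal_term_le_suminf: "(f m :: ennreal) \<le> (\<Sum>n. f n)"
  using ennreal_suminf_lessD[of f "f m" m] not_le by blast

theorem lemmaF2:
  fixes f :: "'a::euclidean_space \<Rightarrow> real"
  assumes meas: "f \<in> borel_measurable borel"
    and nonneg: "\<And>x. f x \<ge> 0"
    and bdd: "\<And>r::nat. r \<ge> 1 \<Longrightarrow> bdd_above (f ` {x. real r - 1 \<le> norm x})"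
    and summ: "summable (\<lambda>n::nat. real (Suc n) ^ (DIM('a) - 1) *
                   Sup (f ` {x. real (Suc n) - 1 \<le> norm x}))"
  shows "\<exists>C>0. \<forall>(a::'a) (b::real). a \<noteq> 0 \<longrightarrow>
           (\<integral>\<^sup>+ x. indicator {x. a \<bullet> x = b} x * ennreal (f x)
              \<partial>hausdorff_measure (DIM('a) - 1)) \<le> ennreal C"
proof -
  define s where "s = DIM('a) - 1"
  define S where "S n = {x::'a. real (Suc n) - 1 \<le> norm x}" for n
  define c where "c n = Sup (f ` S n)" for n
  define K where "K = unit_ball_vol s * (3 * real DIM('a)^2) ^ s"
  have K0: "K \<ge> 0" unfolding K_def using vol_nonneg by simp
  have bddS: "bdd_above (f ` S n)" for n unfolding S_def using bdd[of "Suc n"] by simp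
  have cup: "f x \<le> c n" if "x \<in> S n" for x n
    unfolding c_def by (rule cSup_upper) (use that bddS in auto)
  have Sne: "S n \<noteq> {}" for n
  proof -
    obtain u :: 'a where u: "u \<in> Basis" using nonempty_Basis by blast
    have "real n *\<^sub>R u \<in> S n" using u by (simp add: S_def)
    thus ?thesis by blast
  qed
  have c0: "c n \<ge> 0" for n
  proof -
    obtain x where "x \<in> S n" using Sne by blast
    thus ?thesis using cup[of x n] nonneg[of x] by linarith
  qed
  have summ': "summable (\<lambda>n. real (Suc n) ^ s * c n)" using summ by (simp add: s_def c_def S_def)
  have ctend: "c \<longlonglongrightarrow> 0"
  proof (rule tendsto_sandwich[where f = "\<lambda>_. 0" and h = "\<lambda>n. real (Suc n) ^ s * c n"])
    show "\<forall>\<^sub>F n in sequentially. 0 \<le> c n" using c0 by simp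
    have "c n \<le> real (Suc n) ^ s * c n" for n
    proof -
      have one: "1 \<le> real (Suc n) ^ s" by (rule one_le_power) simp
      show ?thesis using mult_right_mono[OF one c0[of n]] by simp
    qed
    thus "\<forall>\<^sub>F n in sequentially. c n \<le> real (Suc n) ^ s * c n" by simp
    show "(\<lambda>n. real (Suc n) ^ s * c n) \<longlonglongrightarrow> 0" by (rule summable_LIMSEQ_zero[OF summ'])
  qed simp
  define T where "T = (\<Sum>n. c n * (K * real (Suc n) ^ s))"
  have summK: "summable (\<lambda>n. c n * (K * real (Suc n) ^ s))"
    using summable_mult[OF summ', of K] by (simp add: algebra_simps)
  have T0: "T \<ge> 0" unfolding T_def using c0 K0 by (intro suminf_nonneg[OF summK]) auto
  show ?thesis
  proof (intro exI[of _ "1 + T"] conjI allI impI)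
    show "0 < 1 + T" using T0 by simp
    fix a :: 'a and b :: real
    assume a: "a \<noteq> 0"
    let ?H = "{x. a \<bullet> x = b}"
    let ?M = "hausdorff_measure (DIM('a) - 1) :: 'a measure"
    have spM: "\<And>k. space (hausdorff_measure k :: 'a measure) = UNIV" by (simp add: hausdorff_measure_def space_measure_of_conv)
    have "(\<integral>\<^sup>+ x. indicator ?H x * ennreal (f x) \<partial>?M) \<le> ennreal T"
      unfolding nn_integral_def
    proof (rule SUP_least)
      fix g assume "g \<in> {g. simple_function ?M g \<and> g \<le> (\<lambda>x. indicator ?H x * ennreal (f x))}"
      hence g1: "simple_function ?M g" and g2: "g \<le> (\<lambda>x. indicator ?H x * ennreal (f x))" by blast+
      have g: "simple_function ?M g" "\<And>x. g x \<le> indicator ?H x * ennreal (f x)"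
        using g1 le_funD[OF g2] by auto
      have gm: "g \<in> borel_measurable ?M" by (rule borel_measurable_simple_function[OF g(1)])
      define A where "A n = {x. ennreal (c (Suc n)) < g x}" for n
      have Am: "A n \<in> sets ?M" for n
      proof -
        have "{x \<in> space ?M. ennreal (c (Suc n)) < g x} \<in> sets ?M" using gm by measurable
        thus ?thesis by (simp add: A_def spM)
      qed
      have gH: "x \<in> ?H \<and> g x \<le> ennreal (f x)" if "0 < g x" for x
      proof (cases "a \<bullet> x = b")
        case True thus ?thesis using g(2)[of x] by simp
      next
        case False
        hence "g x \<le> 0" using g(2)[of x] by simp
        thus ?thesis using that by simp
      qed
      have Asub: "A n \<subseteq> ?H \<inter> cball 0 (real (Suc n))" for n
      proof
        fix x assume "x \<in> A n"
        hence lt: "ennreal (c (Suc n)) < g x" by (simp add: A_def)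
        hence "0 < g x" by (metis order_le_less_trans zero_le)
        hence xH: "x \<in> ?H" and gf: "g x \<le> ennreal (f x)" using gH by auto
        have lt2: "c (Suc n) < f x" using order_less_le_trans[OF lt gf] c0 by (simp add: ennreal_less_iff)
        have "norm x \<le> real (Suc n)"
        proof (rule ccontr)
          assume "\<not> norm x \<le> real (Suc n)"
          hence "x \<in> S (Suc n)" by (simp add: S_def)
          hence "f x \<le> c (Suc n)" by (rule cup)
          thus False using lt2 by simp
        qed
        thus "x \<in> ?H \<inter> cball 0 (real (Suc n))" using xH by simp
      qed
      have pt: "g x \<le> (\<Sum>n. ennreal (c n) * indicator (A n) x)" for x
      proof (cases "g x = 0")
        case False
        hence gpos: "0 < g x" using not_gr_zero by blast
        hence xH: "x \<in> ?H" and gf: "g x \<le> ennreal (f x)" using gH by auto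
        obtain y where y: "g x = ennreal y" "0 \<le> y"
          using gf by (cases "g x") (auto simp: top_unique)
        have ypos: "0 < y" using gpos y by simp
        have "\<forall>\<^sub>F n in sequentially. c n < y"
          using ctend ypos by (simp add: order_tendsto_iff)
        then obtain n0 where "\<forall>n\<ge>n0. c n < y" by (auto simp: eventually_sequentially)
        hence ex: "\<exists>n. c (Suc n) < y" using le_SucI[OF order_refl, of n0] by blast
        define m where "m = (LEAST n. c (Suc n) < y)"
        have m1: "c (Suc m) < y" unfolding m_def by (rule LeastI_ex[OF ex])
        have m2: "y \<le> c m"
        proof (cases m)
          case 0
          have "x \<in> S 0" by (simp add: S_def)
          hence "f x \<le> c 0" by (rule cup)
          moreover have "y \<le> f x" using gf y nonneg by simp
          ultimately show ?thesis using 0 by simp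
        next
          case (Suc m')
          have "\<not> c (Suc m') < y" using not_less_Least[of m' "\<lambda>n. c (Suc n) < y"] Suc m_def by simp
          thus ?thesis using Suc by simp
        qed
        have "x \<in> A m" using m1 y c0 by (simp add: A_def ennreal_less_iff)
        hence "g x \<le> ennreal (c m) * indicator (A m) x" using y m2 by (simp add: ennreal_leI)
        also have "\<dots> \<le> (\<Sum>n. ennreal (c n) * indicator (A n) x)"
          by (rule ennreal_term_le_suminf)
        finally show ?thesis .
      qed simp
      have "integral\<^sup>S ?M g = integral\<^sup>N ?M g" by (rule nn_integral_eq_simple_integral[OF g(1), symmetric])
      also have "\<dots> \<le> (\<integral>\<^sup>+ x. (\<Sum>n. ennreal (c n) * indicator (A n) x) \<partial>?M)"
        by (rule nn_integral_mono) (rule pt)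
      also have "\<dots> = (\<Sum>n. \<integral>\<^sup>+ x. ennreal (c n) * indicator (A n) x \<partial>?M)"
        by (rule nn_integral_suminf) (use Am in auto)
      also have "\<dots> = (\<Sum>n. ennreal (c n) * emeasure ?M (A n))"
        using Am by (simp add: nn_integral_cmult_indicator)
      also have "\<dots> \<le> (\<Sum>n. ennreal (c n * (K * real (Suc n) ^ s)))"
      proof (rule suminf_le)
        fix n
        have "emeasure ?M (A n) \<le> hausdorff_outer (DIM('a) - 1) (A n)"
          by (rule emeasure_le_outer)
        also have "\<dots> \<le> hausdorff_outer (DIM('a) - 1) (?H \<inter> cball 0 (real (Suc n)))"
          by (rule outer_mono[OF Asub])
        also have "\<dots> \<le> ennreal (unit_ball_vol (DIM('a)-1) * (3 * real DIM('a)^2 * real (Suc n))^(DIM('a)-1))"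
          by (rule outer_bound[OF a]) simp
        also have "\<dots> = ennreal (K * real (Suc n) ^ s)"
          by (simp add: K_def s_def power_mult_distrib mult.assoc)
        finally have "emeasure ?M (A n) \<le> ennreal (K * real (Suc n) ^ s)" .
        hence "ennreal (c n) * emeasure ?M (A n) \<le> ennreal (c n) * ennreal (K * real (Suc n) ^ s)"
          by (rule mult_left_mono) simp
        thus "ennreal (c n) * emeasure ?M (A n) \<le> ennreal (c n * (K * real (Suc n) ^ s))"
          using c0[of n] K0 by (simp add: ennreal_mult)
      qed auto
      also have "\<dots> = ennreal T"
        unfolding T_def using summK c0 K0 by (intro suminf_ennreal2) auto
      finally show "integral\<^sup>S ?M g \<le> ennreal T" .
    qed
    also have "\<dots> \<le> ennreal (1 + T)" by (rule ennreal_leI) simp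
    finally show "(\<integral>\<^sup>+ x. indicator {x. a \<bullet> x = b} x * ennreal (f x) \<partial>hausdorff_measure (DIM('a) - 1)) \<le> ennreal (1 + T)" .
  qed
qed

end
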